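(* Let $1\le m\le D$. For each $\mathbf a\in\{0,1\}^N$ define the function $f_{\mathbf a}:\Sigma_m\to\mathbb R$ by $$f_{\mathbf a}(S)=\frac{n_S(Z_{\mathbf a}=+1)-n_S(Z_{\mathbf a}=-1)}{m},$$ where $n_S(Z_{\mathbf a}=\pm1)$ is the number of $\mathbf z\in S$ with $(-1)^{\mathbf a\cdot\mathbf z}=\pm1$. Then $f_{\mathbf a}$ is an eigenfunction of the transition matrix of the local automaton Markov chain on $\Sigma_m$ with eigenvalue $1-\frac{|\mathbf a|}{2N}$, i.e. $$\frac{1}{|\mathcal G|}\sum_{u\in\mathcal G}f_{\mathbf a}(u(S))=\Big(1-\frac{|\mathbf a|}{2N}\Big)f_{\mathbf a}(S)\quad\text{for all }S\in\Sigma_m,$$ where $|\mathbf a|$ is the Hamming weight of $\mathbf a$.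
   Context: Consider $N\ge3$ qubits on a ring (site indices modulo $N$), bitstrings $\mathbf z\in\{0,1\}^N$, $D=2^N$, and $\mathbf a\cdot\mathbf z=\sum_i a_iz_i$. The gate set is $\mathcal G=\{u_{iab}: i\in\{1,\dots,N\},\ a,b\in\{0,1\}\}$ ($|\mathcal G|=4N$), where $u_{iab}$ is the permutation of $\{0,1\}^N$ that flips bit $i$ if and only if bit $i-1$ equals $a$ and bit $i+1$ equals $b$. $\Sigma_m$ is the set of subsets of $\{0,1\}^N$ of cardinality $m$, with $u(S)=\{u(\mathbf z):\mathbf z\in S\}$; the induced Markov chain has transition matrix $\Gamma_{S,S'}=\frac{1}{|\mathcal G|}\sum_{u\in\mathcal G}\delta_{S',u(S)}$, and $(\Gamma f)(S)=\sum_{S'}\Gamma_{S,S'}f(S')$. *)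

theory Defs
  imports Complex_Main
begin

text \<open>Bitstrings of length N: functions nat => bool vanishing outside {..<N}
  (site i in 0..N-1 corresponds to site i+1 of the paper; indices modulo N).\<close>
definition bitstrings :: "nat \<Rightarrow> (nat \<Rightarrow> bool) set" where
  "bitstrings N = {z. \<forall>i. N \<le> i \<longrightarrow> \<not> z i}"

definition gate :: "nat \<Rightarrow> nat \<Rightarrow> bool \<Rightarrow> bool \<Rightarrow> (nat \<Rightarrow> bool) \<Rightarrow> (nat \<Rightarrow> bool)" where
  "gate N i a b z =
     (if z ((i + N - 1) mod N) = a \<and> z ((i + 1) mod N) = b then z(i := \<not> z i) else z)"

definition gate_idx :: "nat \<Rightarrow> (nat \<times> bool \<times> bool) set" where
  "gate_idx N = {..<N} \<times> (UNIV :: bool set) \<times> (UNIV :: bool set)"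

definition gate_of :: "nat \<Rightarrow> nat \<times> bool \<times> bool \<Rightarrow> (nat \<Rightarrow> bool) \<Rightarrow> (nat \<Rightarrow> bool)" where
  "gate_of N g = (case g of (i, a, b) \<Rightarrow> gate N i a b)"

definition Sigma_m :: "nat \<Rightarrow> nat \<Rightarrow> (nat \<Rightarrow> bool) set set" where
  "Sigma_m N m = {S. S \<subseteq> bitstrings N \<and> card S = m}"

definition Gamma :: "nat \<Rightarrow> (nat \<Rightarrow> bool) set \<Rightarrow> (nat \<Rightarrow> bool) set \<Rightarrow> real" where
  "Gamma N S S' = (1 / real (card (gate_idx N))) *
      (\<Sum>g\<in>gate_idx N. if S' = gate_of N g ` S then 1 else 0)"

definition Gamma_op :: "nat \<Rightarrow> nat \<Rightarrow> ((nat \<Rightarrow> bool) set \<Rightarrow> real) \<Rightarrow> (nat \<Rightarrow> bool) set \<Rightarrow> real" where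
  "Gamma_op N m f S = (\<Sum>S'\<in>Sigma_m N m. Gamma N S S' * f S')"

definition dotp :: "nat \<Rightarrow> (nat \<Rightarrow> bool) \<Rightarrow> (nat \<Rightarrow> bool) \<Rightarrow> nat" where
  "dotp N a z = card {i\<in>{..<N}. a i \<and> z i}"

definition hamming_weight :: "nat \<Rightarrow> (nat \<Rightarrow> bool) \<Rightarrow> nat" where
  "hamming_weight N a = card {i\<in>{..<N}. a i}"

definition f_a :: "nat \<Rightarrow> nat \<Rightarrow> (nat \<Rightarrow> bool) \<Rightarrow> (nat \<Rightarrow> bool) set \<Rightarrow> real" where
  "f_a N m a S = (real (card {z\<in>S. even (dotp N a z)}) - real (card {z\<in>S. odd (dotp N a z)})) / real m"

end

theory Submission
  imports Defs
begin

definition chi :: "nat \<Rightarrow> (nat \<Rightarrow> bool) \<Rightarrow> (nat \<Rightarrow> bool) \<Rightarrow> real" where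
  "chi N a z = (if even (dotp N a z) then 1 else -1)"

lemma finite_bitstrings: "finite (bitstrings N)"
proof -
  have "bitstrings N \<subseteq> (\<lambda>A i. i \<in> A) ` Pow {..<N}"
  proof
    fix z assume "z \<in> bitstrings N"
    then have "{i. z i} \<in> Pow {..<N}" unfolding bitstrings_def
      using not_le by auto
    moreover have "z = (\<lambda>i. i \<in> {i. z i})" by auto
    ultimately show "z \<in> (\<lambda>A i. i \<in> A) ` Pow {..<N}" by blast
  qed
  then show ?thesis by (rule finite_subset) auto
qed

lemma finite_Sigma: "finite (Sigma_m N m)"
proof -
  have "Sigma_m N m \<subseteq> Pow (bitstrings N)" unfolding Sigma_m_def by auto
  then show ?thesis using finite_bitstrings by (meson finite_Pow_iff finite_subset)
qed

lemma dotp_flip: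
  assumes "i < N"
  shows "even (dotp N a (z(i := \<not> z i))) = (if a i then odd (dotp N a z) else even (dotp N a z))"
proof -
  define A where "A = {j\<in>{..<N}. a j \<and> z j}"
  have fA: "finite A" unfolding A_def by auto
  have "{j\<in>{..<N}. a j \<and> (z(i := \<not> z i)) j} =
        (if a i then (if z i then A - {i} else insert i A) else A)"
    using assms unfolding A_def by auto
  moreover have "a i \<Longrightarrow> z i \<Longrightarrow> i \<in> A" using assms unfolding A_def by auto
  moreover have "a i \<Longrightarrow> \<not> z i \<Longrightarrow> i \<notin> A" unfolding A_def by auto
  ultimately show ?thesis unfolding dotp_def A_def[symmetric]
    using fA by (auto simp: card_Diff_singleton)
qed

lemma chi_gate_sum:
  assumes "z \<in> bitstrings N" "i < N"
  shows "(\<Sum>bc\<in>(UNIV::bool set) \<times> (UNIV::bool set). chi N a (gate N i (fst bc) (snd bc) z))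
         = (if a i then 2 else 4) * chi N a z"
proof -
  let ?p = "z ((i + N - 1) mod N)" and ?q = "z ((i + 1) mod N)"
  have U: "(UNIV::bool set) \<times> (UNIV::bool set) = {(True,True),(True,False),(False,True),(False,False)}"
    by auto
  have g: "gate N i b c z = (if ?p = b \<and> ?q = c then z(i := \<not> z i) else z)" for b c
    unfolding gate_def by simp
  have cf: "chi N a (z(i := \<not> z i)) = (if a i then - chi N a z else chi N a z)"
    unfolding chi_def using dotp_flip[OF assms(2)] by auto
  show ?thesis unfolding U
    by (cases ?p; cases ?q; cases "a i") (simp_all add: g cf)
qed

lemma chi_total:
  assumes "z \<in> bitstrings N"
  shows "(\<Sum>g\<in>gate_idx N. chi N a (gate_of N g z))
         = (4 * real N - 2 * real (hamming_weight N a)) * chi N a z"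
proof -
  have "(\<Sum>g\<in>gate_idx N. chi N a (gate_of N g z))
       = (\<Sum>i<N. \<Sum>bc\<in>(UNIV::bool set) \<times> (UNIV::bool set). chi N a (gate N i (fst bc) (snd bc) z))"
    unfolding gate_idx_def gate_of_def by (simp add: sum.cartesian_product case_prod_beta)
  also have "\<dots> = (\<Sum>i<N. (if a i then 2 else 4) * chi N a z)"
    using chi_gate_sum[OF assms] by simp
  also have "\<dots> = (\<Sum>i<N. 4 - (if a i then 2 else 0)) * chi N a z"
    by (simp add: sum_distrib_right) (rule sum.cong; auto)
  also have "(\<Sum>i<N. 4 - (if a i then 2 else 0)) = 4 * real N - 2 * real (hamming_weight N a)"
  proof -
    have "(\<Sum>i<N. (if a i then 2 else 0::real)) = 2 * real (hamming_weight N a)"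
      unfolding hamming_weight_def by (simp add: sum.If_cases Int_def conj_commute)
    then show ?thesis by (simp add: sum_subtractf)
  qed
  finally show ?thesis .
qed

lemma h1: "(N::nat) \<ge> 2 \<Longrightarrow> i < N \<Longrightarrow> (i + N - 1) mod N \<noteq> i"
proof (cases "i = 0")
  case True
  assume "N \<ge> 2" "i < N"
  then show ?thesis using True by simp
next
  case False
  assume a: "N \<ge> 2" "i < N"
  then obtain k where k: "i = Suc k" using False by (cases i) auto
  have "i + N - 1 = k + N" using k by simp
  moreover have "(k + N) mod N = k" using k a by simp
  ultimately show ?thesis using k by simp
qed

lemma h2: "(N::nat) \<ge> 2 \<Longrightarrow> i < N \<Longrightarrow> (i + 1) mod N \<noteq> i"
proof (cases "i + 1 < N")
  case True then show ?thesis by simp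
next
  case False
  assume a: "N \<ge> 2" "i < N"
  then have "i + 1 = N" using False by simp
  then show ?thesis using a by simp
qed

lemma gate_invol:
  assumes "N \<ge> 2" "i < N"
  shows "gate N i b c (gate N i b c z) = z"
proof -
  have h1: "(i + N - 1) mod N \<noteq> i" using h1 assms .
  have h2: "(i + 1) mod N \<noteq> i" using h2 assms .
  let ?C = "\<lambda>z. z ((i + N - 1) mod N) = b \<and> z ((i + 1) mod N) = c"
  show ?thesis
  proof (cases "?C z")
    case True
    then have "?C (z(i := \<not> z i))" using h1 h2 by simp
    then show ?thesis using True unfolding gate_def by simp
  next
    case False
    then have e: "gate N i b c z = z" unfolding gate_def by (intro if_not_P) blast
    then show ?thesis by simp
  qed
qed

lemma gate_bitstrings:
  assumes "z \<in> bitstrings N" "i < N"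
  shows "gate N i b c z \<in> bitstrings N"
  using assms unfolding gate_def bitstrings_def by auto

theorem mainTheorem13:
  fixes N m :: nat and a :: "nat \<Rightarrow> bool" and S :: "(nat \<Rightarrow> bool) set"
  assumes "N \<ge> 3" and "1 \<le> m" and "m \<le> 2 ^ N"
    and "a \<in> bitstrings N"
    and "S \<in> Sigma_m N m"
  shows "Gamma_op N m (f_a N m a) S
         = (1 - real (hamming_weight N a) / (2 * real N)) * f_a N m a S"
proof -
  have Sb: "S \<subseteq> bitstrings N" and cS: "card S = m" using assms(5) unfolding Sigma_m_def by auto
  have fS: "finite S" using Sb finite_bitstrings finite_subset by blast
  have fchi: "f_a N m a T = (\<Sum>z\<in>T. chi N a z) / real m" if "finite T" for T
  proof -
    have "(\<Sum>z\<in>T. chi N a z) = (\<Sum>z\<in>{z\<in>T. even (dotp N a z)}. 1) + (\<Sum>z\<in>{z\<in>T. odd (dotp N a z)}. -1)"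
      unfolding chi_def using that by (simp add: sum.If_cases Int_def conj_commute)
    then show ?thesis unfolding f_a_def by simp
  qed
  have inj: "inj_on (gate_of N g) S" if "g \<in> gate_idx N" for g
  proof -
    obtain i b c where g0: "g = (i, b, c)" by (cases g)
    have g: "g = (i, b, c)" "i < N" using g0 that unfolding gate_idx_def by auto
    show ?thesis unfolding g gate_of_def
      by (rule inj_on_inverseI[where g = "gate N i b c"]) (use gate_invol[of N i] g assms(1) in auto)
  qed
  have inSig: "gate_of N g ` S \<in> Sigma_m N m" if "g \<in> gate_idx N" for g
  proof -
    obtain i b c where g0: "g = (i, b, c)" by (cases g)
    have g: "g = (i, b, c)" "i < N" using g0 that unfolding gate_idx_def by auto
    have "gate_of N g ` S \<subseteq> bitstrings N"
      using Sb gate_bitstrings[OF _ g(2)] unfolding g gate_of_def by auto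
    moreover have "card (gate_of N g ` S) = m" using card_image[OF inj[OF that]] cS by simp
    ultimately show ?thesis unfolding Sigma_m_def by simp
  qed
  have U4: "card ((UNIV::bool set) \<times> (UNIV::bool set)) = 4"
    by (simp only: card_cartesian_product card_UNIV_bool)
  have cG: "card (gate_idx N) = 4 * N" unfolding gate_idx_def
    by (simp only: card_cartesian_product[of "{..<N}"] U4 card_lessThan mult.commute)
  have "Gamma_op N m (f_a N m a) S
      = (1 / real (4 * N)) * (\<Sum>g\<in>gate_idx N. \<Sum>S'\<in>Sigma_m N m.
            (if S' = gate_of N g ` S then f_a N m a S' else 0))"
  proof -
    have "Gamma_op N m (f_a N m a) S = (\<Sum>S'\<in>Sigma_m N m. \<Sum>g\<in>gate_idx N.
            (1 / real (4 * N)) * (if S' = gate_of N g ` S then f_a N m a S' else 0))"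
      unfolding Gamma_op_def Gamma_def cG
    proof (rule sum.cong[OF refl])
      fix S' show "1 / real (4 * N) * (\<Sum>g\<in>gate_idx N. if S' = gate_of N g ` S then 1 else 0) * f_a N m a S' =
         (\<Sum>g\<in>gate_idx N. 1 / real (4 * N) * (if S' = gate_of N g ` S then f_a N m a S' else 0))"
        by (simp add: sum_distrib_left sum_distrib_right mult.assoc; rule sum.cong; simp)
    qed
    also have "\<dots> = (\<Sum>g\<in>gate_idx N. \<Sum>S'\<in>Sigma_m N m.
            (1 / real (4 * N)) * (if S' = gate_of N g ` S then f_a N m a S' else 0))"
      by (rule sum.swap)
    finally show ?thesis by (simp add: sum_distrib_left)
  qed
  also have "\<dots> = (1 / real (4 * N)) * (\<Sum>g\<in>gate_idx N. f_a N m a (gate_of N g ` S))"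
    using inSig finite_Sigma by (simp add: sum.delta')
  also have "\<dots> = (1 / real (4 * N)) * (\<Sum>g\<in>gate_idx N. (\<Sum>z\<in>S. chi N a (gate_of N g z)) / real m)"
    using fchi fS inj by (simp add: sum.reindex)
  also have "\<dots> = (1 / real (4 * N)) * ((\<Sum>z\<in>S. \<Sum>g\<in>gate_idx N. chi N a (gate_of N g z)) / real m)"
    by (simp add: sum_divide_distrib[symmetric] sum.swap[of _ "gate_idx N"])
  also have "\<dots> = (1 / real (4 * N)) * ((\<Sum>z\<in>S. (4 * real N - 2 * real (hamming_weight N a)) * chi N a z) / real m)"
    using chi_total Sb by (simp add: subset_iff)
  also have "\<dots> = (1 - real (hamming_weight N a) / (2 * real N)) * f_a N m a S"
  proof -
    have e: "(\<Sum>z\<in>S. (4 * real N - 2 * real (hamming_weight N a)) * chi N a z)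
       = (4 * real N - 2 * real (hamming_weight N a)) * (\<Sum>z\<in>S. chi N a z)"
      by (rule sum_distrib_left[symmetric])
    have N0: "real N > 0" using assms(1) by simp
    have m0: "real m > 0" using assms(2) by simp
    show ?thesis unfolding e fchi[OF fS] using N0 m0 by (simp add: field_simps)
  qed
  finally show ?thesis .
qed

end
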